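(* Let $n\ge 5$ and let $G\in \Theta_n$. (1) $\mathrm{irr}_t(G)\ge 2n-4$. Equality holds if and only if the degree sequence of $G$ is $(3,3,2,\ldots,2)$, i.e. two vertices of degree $3$ and $n-2$ vertices of degree $2$. (2) If the degree sequence of $G$ is not $(3,3,2,\ldots,2)$, then $\mathrm{irr}_t(G)\ge 4n-10$. Equality holds if and only if the degree sequence of $G$ is $(3,3,3,2,\ldots,2,1)$, i.e. three vertices of degree $3$, $n-4$ vertices of degree $2$ and one vertex of degree $1$.
   Context: A bicyclic graph is a simple connected graph whose number of edges equals its number of vertices plus one. For a graph $G=(V,E)$ and $w\in V$, $d_G(w)$ is the degree of $w$. The total irregularity is $\mathrm{irr}_t(G)=\frac12\sum_{x,y\in V}|d_G(x)-d_G(y)|$, where the sum runs over all ordered pairs of vertices. Degree sequences are listed in nonincreasing order. For $p,q\ge 3$ and $l\ge 2$, the $\Theta$-graph $\theta(p,q,l)$ is the graph on $p+q-l$ vertices consisting of two cycles $C_p$ and $C_q$ that have exactly $l$ common vertices, forming a common path. Equivalently, it consists of two vertices joined by three internally disjoint paths. $\Theta_n$ denotes the set of bicyclic graphs on $n$ vertices obtained from some $\theta(p,q,l)$ by attaching trees. *)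

theory Defs
  imports Main "HOL-Library.Multiset" Complex_Main
begin

definition simple_graph :: "'a set \<Rightarrow> 'a set set \<Rightarrow> bool" where
  "simple_graph V E \<longleftrightarrow> finite V \<and> (\<forall>e\<in>E. e \<subseteq> V \<and> card e = 2)"

definition degree :: "'a set set \<Rightarrow> 'a \<Rightarrow> nat" where
  "degree E v = card {e\<in>E. v \<in> e}"

definition is_walk :: "'a set \<Rightarrow> 'a set set \<Rightarrow> 'a list \<Rightarrow> bool" where
  "is_walk V E xs \<longleftrightarrow> xs \<noteq> [] \<and> set xs \<subseteq> V \<and>
     (\<forall>i. Suc i < length xs \<longrightarrow> {xs ! i, xs ! Suc i} \<in> E)"

definition connected_by :: "'a set \<Rightarrow> 'a set set \<Rightarrow> 'a \<Rightarrow> 'a \<Rightarrow> bool" where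
  "connected_by V E u v \<longleftrightarrow> (\<exists>xs. is_walk V E xs \<and> hd xs = u \<and> last xs = v)"

definition connected_graph :: "'a set \<Rightarrow> 'a set set \<Rightarrow> bool" where
  "connected_graph V E \<longleftrightarrow> V \<noteq> {} \<and> (\<forall>u\<in>V. \<forall>v\<in>V. connected_by V E u v)"

definition bicyclic :: "'a set \<Rightarrow> 'a set set \<Rightarrow> bool" where
  "bicyclic V E \<longleftrightarrow> simple_graph V E \<and> connected_graph V E \<and> card E = card V + 1"

definition is_path :: "'a set \<Rightarrow> 'a set set \<Rightarrow> 'a list \<Rightarrow> bool" where
  "is_path V E xs \<longleftrightarrow> is_walk V E xs \<and> distinct xs \<and> length xs \<ge> 2"

definition path_edges :: "'a list \<Rightarrow> 'a set set" where
  "path_edges xs = {{xs ! i, xs ! Suc i} | i. Suc i < length xs}"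

definition is_cycle :: "'a set \<Rightarrow> 'a set set \<Rightarrow> 'a list \<Rightarrow> bool" where
  "is_cycle V E xs \<longleftrightarrow> is_walk V E xs \<and> distinct xs \<and> length xs \<ge> 3 \<and>
     {last xs, hd xs} \<in> E"

definition acyclic_graph :: "'a set \<Rightarrow> 'a set set \<Rightarrow> bool" where
  "acyclic_graph V E \<longleftrightarrow> \<not> (\<exists>xs. is_cycle V E xs)"

text \<open>Theta-graph theta(p,q,l) as a subgraph, given by three internally disjoint paths
  P1, P2, P3 between two vertices u and v.  P1 is the common path of l = length P1 \<ge> 2
  vertices; the cycles are C_p = P1 \<union> P2 and C_q = P1 \<union> P3 with
  p = length P1 + length P2 - 2 \<ge> 3 and q = length P1 + length P3 - 2 \<ge> 3.\<close>
definition theta_paths :: "'a set \<Rightarrow> 'a set set \<Rightarrow> 'a list \<Rightarrow> 'a list \<Rightarrow> 'a list \<Rightarrow> bool" where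
  "theta_paths V E P1 P2 P3 \<longleftrightarrow>
     is_path V E P1 \<and> is_path V E P2 \<and> is_path V E P3 \<and>
     length P2 \<ge> 3 \<and> length P3 \<ge> 3 \<and>
     hd P2 = hd P1 \<and> hd P3 = hd P1 \<and> last P2 = last P1 \<and> last P3 = last P1 \<and>
     set P1 \<inter> set P2 = {hd P1, last P1} \<and>
     set P1 \<inter> set P3 = {hd P1, last P1} \<and>
     set P2 \<inter> set P3 = {hd P1, last P1}"

text \<open>Theta_n: bicyclic graphs obtained from a theta-graph H (vertices VH, edges EH)
  by attaching trees: the remaining edges E - EH form a forest on V in which every
  vertex is joined to exactly one vertex of H.\<close>
definition Theta_class :: "'a set \<Rightarrow> 'a set set \<Rightarrow> bool" where
  "Theta_class V E \<longleftrightarrow> bicyclic V E \<and>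
     (\<exists>P1 P2 P3. theta_paths V E P1 P2 P3 \<and>
        (let VH = set P1 \<union> set P2 \<union> set P3;
             EH = path_edges P1 \<union> path_edges P2 \<union> path_edges P3
         in acyclic_graph V (E - EH) \<and>
            (\<forall>w\<in>V. \<exists>!h. h \<in> VH \<and> connected_by V (E - EH) w h)))"

definition irr_t :: "'a set \<Rightarrow> 'a set set \<Rightarrow> real" where
  "irr_t V E = (1/2) * (\<Sum>x\<in>V. \<Sum>y\<in>V. \<bar>real (degree E x) - real (degree E y)\<bar>)"

text \<open>Degree sequence as a multiset (the nonincreasing sequence up to ordering).\<close>
definition degree_mset :: "'a set \<Rightarrow> 'a set set \<Rightarrow> nat multiset" where
  "degree_mset V E = image_mset (degree E) (mset_set V)"

end

theory Submission
  imports Defs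
begin

definition phi :: "nat multiset \<Rightarrow> nat multiset \<Rightarrow> real" where
  "phi X Y = (\<Sum>a\<in>#X. \<Sum>b\<in>#Y. \<bar>real a - real b\<bar>)"

lemma phi_add1[simp]: "phi (X + Y) Z = phi X Z + phi Y Z"
  by (simp add: phi_def)
lemma phi_add2[simp]: "phi X (Y + Z) = phi X Y + phi X Z"
  by (simp add: phi_def sum_mset.distrib)
lemma phi_rep1[simp]: "phi (replicate_mset k x) Y = real k * (\<Sum>b\<in>#Y. \<bar>real x - real b\<bar>)"
  by (simp add: phi_def)
lemma phi_rep2[simp]: "phi X (replicate_mset k y) = real k * (\<Sum>a\<in>#X. \<bar>real a - real y\<bar>)"
  by (simp add: phi_def sum_mset_distrib_left)


lemma sum_abs_ge: "\<forall>x\<in>#A. k \<le> x \<Longrightarrow>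
   (\<Sum>a\<in>#A. \<bar>real a - real k\<bar>) = real (sum_mset A) - real k * real (size A)"
  by (induction A) (auto simp: algebra_simps)
lemma sum_abs_ge': "\<forall>x\<in>#A. k \<le> x \<Longrightarrow>
   (\<Sum>a\<in>#A. \<bar>real k - real a\<bar>) = real (sum_mset A) - real k * real (size A)"
  by (induction A) (auto simp: algebra_simps)

lemma smn: "(\<And>x. (f x::real) \<ge> 0) \<Longrightarrow> (\<Sum>a\<in>#X. f a) \<ge> 0"
  by (induction X) (auto intro: add_nonneg_nonneg)
lemma phi_nonneg: "phi X Y \<ge> 0"
  unfolding phi_def by (intro smn) auto

lemma sum_ge: "\<forall>x\<in>#A. k \<le> x \<Longrightarrow> k * size A \<le> sum_mset A"
  by (induction A) auto

lemma eq_rep: "\<forall>x\<in>#A. k \<le> x \<Longrightarrow> sum_mset A \<le> k * size A \<Longrightarrow> A = replicate_mset (size A) k"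
proof (induction A)
  case empty then show ?case by simp
next
  case (add x A)
  have "k * size A \<le> sum_mset A" using add.prems by (intro sum_ge) auto
  with add.prems have "x = k" "sum_mset A \<le> k * size A" by auto
  with add show ?case by auto
qed

lemma arith_key: fixes a b c :: nat assumes "c\<ge>1" "a \<le> c+2" "a \<ge> 2"
  shows "b*(c+2) + c*(a+c+2) + b*c + 10 \<ge> 4*(a+b+c) + (if c = 1 \<and> a = 3 then 0 else 1)"
proof -
  have "b*c \<ge> b*1" using assms(1) by (intro mult_le_mono2)
  moreover have "b*(c+2) + b*c = 2*(b*c) + 2*b" by (simp add: algebra_simps)
  ultimately have bb: "b*(c+2) + b*c \<ge> 4*b" by linarith
  have "c*(a+c+2) + 10 \<ge> 4*a + 4*c + (if c = 1 \<and> a = 3 then 0 else 1)"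
  proof (cases "c \<ge> 4")
    case True
    have "4*a \<le> c*a" using True by (intro mult_right_mono) auto
    moreover have "4*c \<le> c*c" using True by (intro mult_right_mono) auto
    moreover have "c*(a+c+2) = c*a + c*c + 2*c" by (simp add: algebra_simps)
    moreover have "(if c = 1 \<and> a = 3 then 0 else 1) = (1::nat)" using True by simp
    ultimately show ?thesis by linarith
  next
    case False
    then have "c = 1 \<or> c = 2 \<or> c = 3" using assms(1) by auto
    then show ?thesis using assms by auto
  qed
  then show ?thesis using bb by simp
qed

lemma comb:
  fixes M :: "nat multiset" and n :: nat
  assumes sz: "size M = n" and nz: "0 \<notin># M" and sm: "sum_mset M = 2*n+2"
    and big: "2 \<le> size (filter_mset (\<lambda>x. 3\<le>x) M)" and n5: "n\<ge>5"
  shows "phi M M / 2 \<ge> 2*real n - 4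
    \<and> (phi M M / 2 = 2*real n - 4 \<longleftrightarrow> M = replicate_mset 2 3 + replicate_mset (n - 2) 2)
    \<and> (M \<noteq> replicate_mset 2 3 + replicate_mset (n - 2) 2 \<longrightarrow>
         phi M M / 2 \<ge> 4*real n - 10
         \<and> (phi M M / 2 = 4*real n - 10 \<longleftrightarrow> M = replicate_mset 3 3 + replicate_mset (n - 4) 2 + {#1#}))"
proof -
  define A where "A = filter_mset (\<lambda>x. 3\<le>x) M"
  define b where "b = count M 2"
  define c where "c = count M 1"
  define a where "a = size A"
  define M1 where "M1 = replicate_mset 2 3 + replicate_mset (n - 2) (2::nat)"
  define M2 where "M2 = replicate_mset 3 3 + replicate_mset (n - 4) 2 + {#1::nat#}"
  have decomp: "M = A + replicate_mset b 2 + replicate_mset c 1"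
  proof (subst multiset_eq_iff, intro allI)
    fix x
    show "count M x = count (A + replicate_mset b 2 + replicate_mset c 1) x"
      using nz unfolding A_def b_def c_def
      by (cases "x = 0"; cases "x = 1"; cases "x = 2") (auto simp: count_eq_zero_iff)
  qed
  have Ak: "\<forall>x\<in>#A. 3\<le>x" unfolding A_def by auto
  have Ak2: "\<forall>x\<in>#A. 2\<le>x" "\<forall>x\<in>#A. 1\<le>x" using Ak by auto
  have nabc: "n = a + b + c" using sz decomp unfolding a_def
    by (metis size_union size_replicate_mset)
  have "sum_mset M = sum_mset A + 2*b + c" by (subst decomp) simp
  hence sA: "sum_mset A = 2*a + c + 2" using sm nabc by simp
  have "3 * a \<le> sum_mset A" unfolding a_def using Ak by (rule sum_ge)
  hence ale: "a \<le> c + 2" using sA by simp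
  have a2: "a \<ge> 2" using big unfolding a_def A_def .
  have phiM: "phi M M = phi A A + 2*b*(c+2) + 2*c*(a+c+2) + 2*b*c"
  proof -
    have h1: "(\<Sum>x\<in>#A. \<bar>real x - 2\<bar>) = real c + 2" "(\<Sum>x\<in>#A. \<bar>2 - real x\<bar>) = real c + 2"
      "(\<Sum>x\<in>#A. \<bar>real x - 1\<bar>) = real a + real c + 2" "(\<Sum>x\<in>#A. \<bar>1 - real x\<bar>) = real a + real c + 2"
      using sum_abs_ge[OF Ak2(1)] sum_abs_ge[OF Ak2(2)] sum_abs_ge'[OF Ak2(1)] sum_abs_ge'[OF Ak2(2)]
      unfolding sA a_def by simp_all
    show ?thesis apply (subst (1 2) decomp) by (simp add: h1 algebra_simps)
  qed
  have pA: "phi A A \<ge> 0" by (rule phi_nonneg)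
  have irr1: "phi M1 M1 / 2 = 2*real n - 4" using n5 unfolding M1_def by (simp add: of_nat_diff)
  have irr2: "phi M2 M2 / 2 = 4*real n - 10"
  proof -
    define X where "X = replicate_mset 3 3 + replicate_mset (n - 4) (2::nat)"
    define R where "R = replicate_mset 1 (1::nat)"
    have "M2 = X + R" unfolding M2_def X_def R_def by simp
    hence e: "phi M2 M2 = phi X X + phi X R + (phi R X + phi R R)" by simp
    have e1: "phi X X = 2 * real (n-4) * 3" unfolding X_def by simp
    have e2: "phi X R = 6 + real (n-4)" unfolding R_def phi_rep2 unfolding X_def by simp
    have e3: "phi R X = 6 + real (n-4)" unfolding R_def phi_rep1 unfolding X_def by simp
    have e4: "phi R R = 0" unfolding R_def phi_rep1 by simp
    show ?thesis unfolding e e1 e2 e3 e4 using n5 by (simp add: of_nat_diff)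
  qed
  have M12: "M1 \<noteq> M2"
  proof
    assume "M1 = M2"
    hence "count M1 1 = count M2 1" by simp
    thus False unfolding M1_def M2_def by simp
  qed
  define Fn where "Fn = b*(c+2) + c*(a+c+2) + b*c"
  have F: "phi M M / 2 = phi A A / 2 + real Fn" using phiM unfolding Fn_def by simp
  have K0: "M = M1" if c0: "c = 0"
  proof -
    have a2': "a = 2" using ale a2 c0 by simp
    have "A = replicate_mset (size A) 3" by (rule eq_rep[OF Ak]) (use sA a2' c0 a_def in simp)
    hence "A = replicate_mset 2 3" using a2' a_def by simp
    moreover have "b = n - 2" using nabc a2' c0 by simp
    ultimately show "M = M1" using decomp c0 unfolding M1_def by simp
  qed
  have K1: "phi M M / 2 \<ge> 4*real n - 10 \<and> (phi M M / 2 = 4*real n - 10 \<longrightarrow> M = M2)" if c1: "c \<ge> 1"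
  proof -
    have key: "Fn + 10 \<ge> 4*n + (if c=1 \<and> a=3 then 0 else 1)"
      using arith_key[OF c1 ale a2, of b] nabc unfolding Fn_def by simp
    hence keyr: "real Fn + 10 \<ge> 4*real n + (if c=1 \<and> a=3 then 0 else 1)"
    proof (cases "c=1 \<and> a=3")
      case True
      with key have "4*n \<le> Fn+10" by simp
      hence "real (4*n) \<le> real (Fn+10)" by (simp only: of_nat_le_iff)
      with True show ?thesis by simp
    next
      case False
      with key have "4*n + 1 \<le> Fn+10" by (auto split: if_splits)
      hence "real (4*n+1) \<le> real (Fn+10)" by (simp only: of_nat_le_iff)
      with False show ?thesis by simp
    qed
    have ge: "phi M M / 2 \<ge> 4*real n - 10" using F pA keyr by (auto split: if_splits)
    moreover have "M = M2" if eq: "phi M M / 2 = 4*real n - 10"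
    proof -
      have ca: "c = 1 \<and> a = 3" using F pA keyr eq by (auto split: if_splits)
      have "A = replicate_mset (size A) 3" by (rule eq_rep[OF Ak]) (use sA ca a_def in simp)
      hence "A = replicate_mset 3 3" using ca a_def by simp
      moreover have "b = n - 4" using nabc ca by simp
      ultimately show "M = M2" using decomp ca unfolding M2_def by simp
    qed
    ultimately show ?thesis by blast
  qed
  have lt: "4*real n - 10 > 2*real n - 4" using n5 by simp
  show ?thesis
  proof (cases "c = 0")
    case True
    then have "M = M1" by (rule K0)
    then show ?thesis using irr1 M12 unfolding M1_def[symmetric] M2_def[symmetric] by auto
  next
    case False
    then have K: "phi M M / 2 \<ge> 4*real n - 10 \<and> (phi M M / 2 = 4*real n - 10 \<longrightarrow> M = M2)"
      using K1 by simp
    show ?thesis unfolding M1_def[symmetric] M2_def[symmetric]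
      using K lt irr1 irr2 M12 by auto
  qed
qed



lemma finE: "simple_graph V E \<Longrightarrow> finite E"
proof -
  assume sg: "simple_graph V E"
  hence "E \<subseteq> Pow V" "finite V" unfolding simple_graph_def by auto
  thus "finite E" by (meson finite_Pow_iff finite_subset)
qed

lemma handshake:
  assumes sg: "simple_graph V E"
  shows "(\<Sum>v\<in>V. degree E v) = 2 * card E"
proof -
  have fE: "finite E" using sg by (rule finE)
  have fV: "finite V" using sg unfolding simple_graph_def by auto
  have "(\<Sum>v\<in>V. degree E v) = (\<Sum>v\<in>V. \<Sum>e\<in>E. if v \<in> e then 1 else 0)"
    unfolding degree_def by (simp only: card_eq_sum sum.inter_filter[OF fE])
  also have "\<dots> = (\<Sum>e\<in>E. \<Sum>v\<in>V. if v \<in> e then 1 else 0)" by (rule sum.swap)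
  also have "\<dots> = (\<Sum>e\<in>E. 2)"
  proof (rule sum.cong)
    fix e assume "e \<in> E"
    hence "e \<subseteq> V" "card e = 2" using sg unfolding simple_graph_def by auto
    hence "{v\<in>V. v \<in> e} = e" by auto
    moreover have "(\<Sum>v\<in>V. if v \<in> e then 1 else 0) = card {v\<in>V. v \<in> e}"
      by (simp only: card_eq_sum sum.inter_filter[OF fV])
    ultimately have "(\<Sum>v\<in>V. if v \<in> e then 1 else 0) = card e" by simp
    thus "(\<Sum>v\<in>V. if v \<in> e then 1 else 0) = (2::nat)" using \<open>card e = 2\<close> by simp
  qed simp
  finally show ?thesis by simp
qed

lemma deg3:
  assumes "finite E" "{w,x}\<in>E" "{w,y}\<in>E" "{w,z}\<in>E" "x\<noteq>w" "y\<noteq>w" "z\<noteq>w" "x\<noteq>y" "x\<noteq>z" "y\<noteq>z"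
  shows "3 \<le> degree E w"
proof -
  have d1: "{w,x} \<noteq> {w,y}" "{w,x} \<noteq> {w,z}" "{w,y} \<noteq> {w,z}" using assms by (simp_all add: doubleton_eq_iff)
  have "card {{w,x},{w,y},{w,z}} = 3" using d1 by simp
  moreover have "{{w,x},{w,y},{w,z}} \<subseteq> {e\<in>E. w \<in> e}" using assms by auto
  moreover have "finite {e\<in>E. w \<in> e}" using assms by auto
  ultimately show ?thesis unfolding degree_def using card_mono by metis
qed

lemma deg_pos:
  assumes sg: "simple_graph V E" and cg: "connected_graph V E" and v: "v \<in> V" and u: "u \<in> V" "u \<noteq> v"
  shows "1 \<le> degree E v"
proof -
  obtain xs where w: "is_walk V E xs" "hd xs = v" "last xs = u"
    using cg u v unfolding connected_graph_def connected_by_def by blast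
  have ne: "xs \<noteq> []" using w unfolding is_walk_def by auto
  have "length xs \<noteq> 1"
  proof
    assume "length xs = 1"
    then obtain a where "xs = [a]" by (metis One_nat_def length_0_conv length_Suc_conv)
    thus False using w u by simp
  qed
  hence l2: "Suc 0 < length xs" using ne by (cases xs) auto
  hence "{xs!0, xs!Suc 0} \<in> E" using w unfolding is_walk_def by auto
  moreover have "xs!0 = v" using w ne by (simp add: hd_conv_nth)
  ultimately have "{v, xs!Suc 0} \<in> {e\<in>E. v \<in> e}" by auto
  moreover have "finite {e\<in>E. v \<in> e}" using finE[OF sg] by auto
  ultimately show ?thesis unfolding degree_def
    by (metis One_nat_def card_0_eq empty_iff less_one not_le)
qed

lemma path_first:
  assumes "is_path V E P"
  shows "{hd P, P!1} \<in> E" "P!1 \<noteq> hd P" "P!1 \<in> set P"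
proof -
  have l: "length P \<ge> 2" "P \<noteq> []" using assms unfolding is_path_def is_walk_def by auto
  hence "{P!0, P!Suc 0} \<in> E" using assms unfolding is_path_def is_walk_def by auto
  thus "{hd P, P!1} \<in> E" using l by (simp add: hd_conv_nth)
  have "P!1 \<noteq> P!0" using assms l unfolding is_path_def by (simp add: nth_eq_iff_index_eq)
  thus "P!1 \<noteq> hd P" using l by (simp add: hd_conv_nth)
  show "P!1 \<in> set P" using l by simp
qed

lemma path_last:
  assumes "is_path V E P"
  shows "{last P, P!(length P - 2)} \<in> E" "P!(length P - 2) \<noteq> last P" "P!(length P - 2) \<in> set P"
proof -
  have l: "length P \<ge> 2" "P \<noteq> []" using assms unfolding is_path_def is_walk_def by auto
  have "Suc (length P - 2) < length P" using l by simp
  hence "{P!(length P - 2), P!Suc (length P - 2)} \<in> E" using assms unfolding is_path_def is_walk_def by blast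
  moreover have "Suc (length P - 2) = length P - 1" using l by simp
  ultimately show "{last P, P!(length P - 2)} \<in> E" using l by (simp add: last_conv_nth insert_commute)
  have "P!(length P - 2) \<noteq> P!(length P - 1)" using assms l unfolding is_path_def by (simp add: nth_eq_iff_index_eq)
  thus "P!(length P - 2) \<noteq> last P" using l by (simp add: last_conv_nth)
  show "P!(length P - 2) \<in> set P" using l by simp
qed

lemma path_inner:
  assumes "is_path V E P" "length P \<ge> 3"
  shows "P!1 \<noteq> last P" "P!(length P - 2) \<noteq> hd P"
proof -
  have l: "P \<noteq> []" using assms by auto
  have d: "distinct P" using assms unfolding is_path_def by auto
  have "P!1 \<noteq> P!(length P - 1)" using d assms by (simp add: nth_eq_iff_index_eq)
  thus "P!1 \<noteq> last P" using l by (simp add: last_conv_nth)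
  have "length P - 2 \<noteq> 0" "length P - 2 < length P" "0 < length P" using assms by auto
  hence "P!(length P - 2) \<noteq> P!0" by (simp add: nth_eq_iff_index_eq[OF d])
  thus "P!(length P - 2) \<noteq> hd P" using l by (simp add: hd_conv_nth)
qed

lemma hubs:
  assumes sg: "simple_graph V E" and th: "theta_paths V E P1 P2 P3"
  shows "hd P1 \<noteq> last P1" "3 \<le> degree E (hd P1)" "3 \<le> degree E (last P1)" "hd P1 \<in> V" "last P1 \<in> V"
proof -
  let ?u = "hd P1" and ?v = "last P1"
  have p: "is_path V E P1" "is_path V E P2" "is_path V E P3" "length P2 \<ge> 3" "length P3 \<ge> 3"
    and h: "hd P2 = ?u" "hd P3 = ?u" "last P2 = ?v" "last P3 = ?v"
    and i: "set P1 \<inter> set P2 = {?u, ?v}" "set P1 \<inter> set P3 = {?u, ?v}" "set P2 \<inter> set P3 = {?u, ?v}"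
    using th unfolding theta_paths_def by auto
  have fE: "finite E" using sg by (rule finE)
  have l1: "length P1 \<ge> 2" "P1 \<noteq> []" using p unfolding is_path_def is_walk_def by auto
  have "P1!0 \<noteq> P1!(length P1 - 1)" using p l1 unfolding is_path_def by (simp add: nth_eq_iff_index_eq)
  thus "?u \<noteq> ?v" using l1 by (simp add: hd_conv_nth last_conv_nth)
  show "?u \<in> V" "?v \<in> V" using p l1 unfolding is_path_def is_walk_def by auto
  note f1 = path_first[OF p(1)] and f2 = path_first[OF p(2)] and f3 = path_first[OF p(3)]
  note i2 = path_inner[OF p(2) p(4)] and i3 = path_inner[OF p(3) p(5)]
  have "P2!1 \<notin> {?u,?v}" using f2 i2 h by auto
  hence a2: "P2!1 \<notin> set P1" "P2!1 \<notin> set P3" using f2(3) i(1) i(3) by blast+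
  have "P3!1 \<notin> {?u,?v}" using f3 i3 h by auto
  hence a3: "P3!1 \<notin> set P1" "P3!1 \<notin> set P2" using f3(3) i(2) i(3) by blast+
  show "3 \<le> degree E ?u"
    apply (rule deg3[OF fE, of ?u "P1!1" "P2!1" "P3!1"])
    using f1 f2 f3 h a2 a3 by auto
  note g1 = path_last[OF p(1)] and g2 = path_last[OF p(2)] and g3 = path_last[OF p(3)]
  have "P2!(length P2 - 2) \<notin> {?u,?v}" using g2 i2 h by auto
  hence b2: "P2!(length P2 - 2) \<notin> set P1" "P2!(length P2 - 2) \<notin> set P3" using g2(3) i(1) i(3) by blast+
  have "P3!(length P3 - 2) \<notin> {?u,?v}" using g3 i3 h by auto
  hence b3: "P3!(length P3 - 2) \<notin> set P1" "P3!(length P3 - 2) \<notin> set P2" using g3(3) i(2) i(3) by blast+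
  show "3 \<le> degree E ?v"
    apply (rule deg3[OF fE, of ?v "P1!(length P1 - 2)" "P2!(length P2 - 2)" "P3!(length P3 - 2)"])
    using g1 g2 g3 h b2 b3 by auto
qed


theorem theorem14:
  fixes V :: "'a set" and E :: "'a set set" and n :: nat
  assumes "Theta_class V E" and "card V = n" and "n \<ge> 5"
  shows "irr_t V E \<ge> 2 * real n - 4
    \<and> (irr_t V E = 2 * real n - 4 \<longleftrightarrow>
         degree_mset V E = replicate_mset 2 3 + replicate_mset (n - 2) 2)
    \<and> (degree_mset V E \<noteq> replicate_mset 2 3 + replicate_mset (n - 2) 2 \<longrightarrow>
         irr_t V E \<ge> 4 * real n - 10
         \<and> (irr_t V E = 4 * real n - 10 \<longleftrightarrow>
              degree_mset V E = replicate_mset 3 3 + replicate_mset (n - 4) 2 + {#1#}))"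
proof -
  have bic: "bicyclic V E" using assms(1) unfolding Theta_class_def by blast
  obtain P1 P2 P3 where th: "theta_paths V E P1 P2 P3" using assms(1) unfolding Theta_class_def by blast
  have sg: "simple_graph V E" and cg: "connected_graph V E" and cE: "card E = card V + 1"
    using bic unfolding bicyclic_def by auto
  have fV: "finite V" using sg unfolding simple_graph_def by auto
  define M where "M = degree_mset V E"
  have irr: "irr_t V E = phi M M / 2"
    unfolding irr_t_def M_def degree_mset_def phi_def
    by (simp add: sum_unfold_sum_mset multiset.map_comp o_def)
  have sz: "size M = n" unfolding M_def degree_mset_def using assms(2) by simp
  have pos: "1 \<le> degree E v" if v: "v \<in> V" for v
  proof -
    have "card (V - {v}) \<ge> 4" using assms(2,3) v fV by simp
    hence "0 < card (V - {v})" by simp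
    hence "V - {v} \<noteq> {}" by (metis card_gt_0_iff)
    then obtain u where "u \<in> V" "u \<noteq> v" by auto
    thus ?thesis using deg_pos[OF sg cg v] by simp
  qed
  have nz: "0 \<notin># M"
  proof
    assume "0 \<in># M"
    then obtain v where "v \<in> V" "degree E v = 0" unfolding M_def degree_mset_def using fV by auto
    thus False using pos by fastforce
  qed
  have sm: "sum_mset M = 2*n+2"
  proof -
    have "sum_mset M = (\<Sum>v\<in>V. degree E v)" unfolding M_def degree_mset_def
      by (simp add: sum_unfold_sum_mset)
    also have "\<dots> = 2 * card E" by (rule handshake[OF sg])
    finally show ?thesis using cE assms(2) by simp
  qed
  have big: "2 \<le> size (filter_mset (\<lambda>x. 3\<le>x) M)"
  proof -
    have "size (filter_mset (\<lambda>x. 3\<le>x) M) = card {v\<in>V. 3 \<le> degree E v}"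
      unfolding M_def degree_mset_def filter_mset_image_mset filter_mset_mset_set[OF fV] by simp
    moreover have "{hd P1, last P1} \<subseteq> {v\<in>V. 3 \<le> degree E v}" using hubs[OF sg th] by auto
    moreover have "card {hd P1, last P1} = 2" using hubs(1)[OF sg th] by simp
    moreover have "finite {v\<in>V. 3 \<le> degree E v}" using fV by simp
    ultimately show ?thesis by (metis card_mono)
  qed
  show ?thesis using comb[OF sz nz sm big assms(3)] unfolding irr M_def .
qed

end
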